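(* Let $n=3/16$ and let $(a_i)_{i\ge0}$, $(b_i)_{i\ge0}$ be defined by $a_0=1$, $a_{i+1}=\frac{i(i+1)+n}{(i+1)(i+2)}a_i$ for $i\ge0$, $b_0=1/n$, $b_1=-1$, and $b_{i+1}=\frac{(2i-1)a_{i-1}-(2i+1)a_i+\{(i-1)i+n\}b_i}{i(i+1)}$ for $i\ge1$. Then for all $0<l'<1$, $$v(l') = 1+\sum_{i=0}^\infty\left(-\tfrac{9}{8}\ln 2\; a_i + n\, b_{i+1} + n\, a_i\ln l'\right) l'^{\,i+1}.$$ Explicitly, the first terms are $$v(l')=1-\Big(\tfrac98\ln2+\tfrac{3}{16}\Big)l'-\Big(\tfrac{27}{256}\ln2-\tfrac{51}{1024}\Big)l'^2-\Big(\tfrac{315}{8192}\ln2-\tfrac{177}{8192}\Big)l'^3+\cdots + l'\ln l'\Big(\tfrac{3}{16}+\tfrac{9}{512}l'+\tfrac{105}{16384}l'^2+\cdots\Big).$$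
   Context: For $0\le m<1$ let $K(m)=\int_0^{\pi/2}(1-m\sin^2\phi)^{-1/2}\,d\phi$ and $E(m)=\int_0^{\pi/2}(1-m\sin^2\phi)^{1/2}\,d\phi$ (complete elliptic integrals of the first and second kinds). For $0<l'\le 1$ let $m(l')=(1-\sqrt{l'})/(1+\sqrt{l'})$. The Principal Field Emission Elliptic Function is $$v(l')=(1+\sqrt{l'})^{1/2}\left[E(m(l'))-\sqrt{l'}\,K(m(l'))\right],\qquad 0<l'\le 1.$$ *)

theory Defs
  imports "HOL-Analysis.Analysis"
begin

definition ellK :: "real \<Rightarrow> real" where
  "ellK m = integral {0..pi/2} (\<lambda>\<phi>. 1 / sqrt (1 - m * (sin \<phi>)^2))"

definition ellE :: "real \<Rightarrow> real" where
  "ellE m = integral {0..pi/2} (\<lambda>\<phi>. sqrt (1 - m * (sin \<phi>)^2))"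

definition mfe :: "real \<Rightarrow> real" where
  "mfe l = (1 - sqrt l) / (1 + sqrt l)"

definition vfe :: "real \<Rightarrow> real" where
  "vfe l = sqrt (1 + sqrt l) * (ellE (mfe l) - sqrt l * ellK (mfe l))"

definition nfe :: real where "nfe = 3/16"

fun afe :: "nat \<Rightarrow> real" where
  "afe 0 = 1"
| "afe (Suc i) = (real i * (real i + 1) + nfe) / ((real i + 1) * (real i + 2)) * afe i"

text \<open>bfe (Suc (Suc i)) is b_{j+1} with j = i+1 \<ge> 1.\<close>
fun bfe :: "nat \<Rightarrow> real" where
  "bfe 0 = 1 / nfe"
| "bfe (Suc 0) = -1"
| "bfe (Suc (Suc i)) =
     ((2 * real (Suc i) - 1) * afe i - (2 * real (Suc i) + 1) * afe (Suc i)
      + (real i * real (Suc i) + nfe) * bfe (Suc i)) / (real (Suc i) * (real (Suc i) + 1))"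

end

theory Submission
  imports Defs "HOL-Real_Asymp.Real_Asymp"
begin

lemma afe_vals: "afe 0 = 1" "afe 1 = 3/32" "afe 2 = 35/1024"
  by (simp_all add: nfe_def numeral_2_eq_2)

lemma bfe_vals: "bfe 1 = -1" "bfe 2 = 17/64" "bfe 3 = 59/512"
  by (simp_all add: nfe_def numeral_2_eq_2 numeral_3_eq_3)

lemma afe_pos: "0 < afe i"
proof (induction i)
  case (Suc i)
  have q0: "0 < (real i * (real i + 1) + nfe) / ((real i + 1) * (real i + 2))"
    by (simp add: nfe_def add_nonneg_pos)
  show ?case unfolding afe.simps by (rule mult_pos_pos[OF q0 Suc])
qed simp

lemma afe_le1: "afe i \<le> 1"
proof (induction i)
  case (Suc i)
  have q: "(real i * (real i + 1) + nfe) / ((real i + 1) * (real i + 2)) \<le> 1"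
    by (simp add: nfe_def divide_le_eq algebra_simps) (smt (verit) of_nat_0_le_iff zero_le_mult_iff)
  have q0: "0 \<le> (real i * (real i + 1) + nfe) / ((real i + 1) * (real i + 2))"
    by (simp add: nfe_def)
  show ?case
    unfolding afe.simps by (rule mult_le_one[OF q]) (use Suc afe_pos[of i] in auto)
qed simp

declare afe.simps(2)[simp del]

lemma bfe_bound: "\<bar>bfe i\<bar> \<le> 2 * real i + 6"
proof (induction i rule: bfe.induct)
  case 1 then show ?case by (simp add: nfe_def)
next
  case 2 then show ?case by simp
next
  case (3 i)
  let ?k = "real (Suc i)"
  have a1: "0 < afe i" "afe i \<le> 1" "0 < afe (Suc i)" "afe (Suc i) \<le> 1"
    using afe_pos afe_le1 by auto
  have den: "0 < ?k * (?k + 1)" by simp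
  have cpos: "0 \<le> real i * ?k + nfe" by (simp add: nfe_def)
  have cle: "real i * ?k + nfe \<le> ?k * (?k + 1)" by (simp add: nfe_def field_simps)
  have "\<bar>(2 * ?k - 1) * afe i - (2 * ?k + 1) * afe (Suc i) + (real i * ?k + nfe) * bfe (Suc i)\<bar>
        \<le> (2 * ?k - 1) * 1 + (2 * ?k + 1) * 1 + ?k * (?k + 1) * \<bar>bfe (Suc i)\<bar>"
  proof -
    have "\<bar>(2 * ?k - 1) * afe i\<bar> \<le> (2 * ?k - 1) * 1"
      using a1 by (simp add: abs_mult)
    moreover have "\<bar>(2 * ?k + 1) * afe (Suc i)\<bar> \<le> (2 * ?k + 1) * 1"
      using a1 by (simp add: abs_mult)
    moreover have "\<bar>(real i * ?k + nfe) * bfe (Suc i)\<bar> \<le> ?k * (?k + 1) * \<bar>bfe (Suc i)\<bar>"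
      using cpos cle by (simp add: abs_mult) (intro mult_right_mono; simp)
    ultimately show ?thesis by linarith
  qed
  hence "\<bar>bfe (Suc (Suc i))\<bar> \<le> ((2 * ?k - 1) + (2 * ?k + 1) + ?k * (?k + 1) * \<bar>bfe (Suc i)\<bar>) / (?k * (?k + 1))"
    using den by (simp add: abs_divide divide_right_mono)
  also have "\<dots> = 4 / (?k + 1) + \<bar>bfe (Suc i)\<bar>"
    using den by (simp add: field_simps)
  also have "\<dots> \<le> 2 + \<bar>bfe (Suc i)\<bar>" by (simp add: field_simps)
  finally show ?case using 3 by simp
qed

lemma summable_poly_geom:
  fixes x :: real assumes "\<bar>x\<bar> < 1"
  shows "summable (\<lambda>n. real (Suc n) * \<bar>x\<bar> ^ n)"
proof -
  have "summable (\<lambda>n. diffs (\<lambda>_. 1::real) n * \<bar>x\<bar> ^ n)"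
    by (rule termdiff_converges[where K=1]) (use assms in \<open>auto intro: summable_geometric\<close>)
  thus ?thesis by (simp add: diffs_def)
qed

lemma summable_bounded_coeff:
  fixes x :: real and c :: "nat \<Rightarrow> real" and C :: real
  assumes "\<bar>x\<bar> < 1" and "\<And>n. \<bar>c n\<bar> \<le> C * real (Suc n)"
  shows "summable (\<lambda>n. c n * x ^ n)"
proof (rule summable_comparison_test[OF _ summable_mult[OF summable_poly_geom[OF assms(1)], of C]])
  show "\<exists>N. \<forall>n\<ge>N. norm (c n * x ^ n) \<le> C * (real (Suc n) * \<bar>x\<bar> ^ n)"
  proof (intro exI allI impI)
    fix n :: nat
    have "\<bar>c n\<bar> * \<bar>x\<bar> ^ n \<le> (C * real (Suc n)) * \<bar>x\<bar> ^ n"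
      using assms(2)[of n] by (intro mult_right_mono) auto
    thus "norm (c n * x ^ n) \<le> C * (real (Suc n) * \<bar>x\<bar> ^ n)" by (simp add: abs_mult power_abs)
  qed
qed

definition alpha :: "nat \<Rightarrow> real" where "alpha n = (if n = 0 then 0 else afe (n - 1))"

lemma afe_abs_le: "\<bar>afe n\<bar> \<le> 1" using afe_pos[of n] afe_le1[of n] by simp

lemma summable_afe: "\<bar>x\<bar> < 1 \<Longrightarrow> summable (\<lambda>n. afe n * x ^ n)"
  by (rule summable_bounded_coeff[where C=1], assumption, rule order_trans[OF afe_abs_le], simp)

lemma summable_alpha: assumes "\<bar>x\<bar> < 1" shows "summable (\<lambda>n. alpha n * x ^ n)"
  proof (rule summable_bounded_coeff[where C=1, OF assms])
  fix n show "\<bar>alpha n\<bar> \<le> 1 * real (Suc n)"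
    unfolding alpha_def by (cases n) (simp_all, rule order_trans[OF afe_abs_le], simp)
qed

lemma summable_bfe: "\<bar>x\<bar> < 1 \<Longrightarrow> summable (\<lambda>n. bfe n * x ^ n)"
proof (rule summable_bounded_coeff[where C=6])
  fix n show "\<bar>bfe n\<bar> \<le> 6 * real (Suc n)" using bfe_bound[of n] by simp
qed


definition ps :: "(nat \<Rightarrow> real) \<Rightarrow> real \<Rightarrow> real" where
  "ps c x = (\<Sum>n. c n * x ^ n)"

definition R1 :: "(nat \<Rightarrow> real) \<Rightarrow> bool" where
  "R1 c \<longleftrightarrow> (\<forall>x. \<bar>x\<bar> < 1 \<longrightarrow> summable (\<lambda>n. c n * x ^ n))"

lemma R1_diffs: "R1 c \<Longrightarrow> R1 (diffs c)"
  unfolding R1_def by (auto intro!: termdiff_converges[where K=1])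

lemma R1_sums: "R1 c \<Longrightarrow> \<bar>x\<bar> < 1 \<Longrightarrow> (\<lambda>n. c n * x ^ n) sums ps c x"
  unfolding R1_def ps_def by (auto intro!: summable_sums)

lemma R1_deriv: "R1 c \<Longrightarrow> \<bar>x\<bar> < 1 \<Longrightarrow> (ps c has_real_derivative ps (diffs c) x) (at x)"
  unfolding ps_def R1_def by (rule termdiffs_strong'[where K=1]) auto

lemma R1_afe: "R1 afe" and R1_alpha: "R1 alpha" and R1_bfe: "R1 bfe"
  unfolding R1_def using summable_afe summable_alpha summable_bfe by auto

lemma ps_zero: "ps c 0 = c 0"
  unfolding ps_def by (rule powser_zero)

definition shift :: "(nat \<Rightarrow> real) \<Rightarrow> nat \<Rightarrow> real" where
  "shift g n = (if n = 0 then 0 else g (n - 1))"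

lemma sums_shift:
  assumes "(\<lambda>n. g n * x ^ n) sums s"
  shows "(\<lambda>n. shift g n * x ^ n) sums (x * s)"
proof -
  have "(\<lambda>n. shift g (Suc n) * x ^ Suc n) sums (x * s)"
    using sums_mult[OF assms, of x] by (simp add: shift_def algebra_simps)
  from sums_Suc[OF this] show ?thesis by (simp add: shift_def)
qed

lemma sums_n_times:
  assumes "R1 c" "\<bar>x\<bar> < 1"
  shows "(\<lambda>n. (real n * c n) * x ^ n) sums (x * ps (diffs c) x)"
proof -
  have "(\<lambda>n. (real (Suc n) * c (Suc n)) * x ^ Suc n) sums (x * ps (diffs c) x)"
    using sums_mult[OF R1_sums[OF R1_diffs[OF assms(1)] assms(2)], of x]
    by (simp add: diffs_def algebra_simps)
  from sums_Suc[OF this] show ?thesis by simp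
qed

lemma alpha_eq: "alpha = shift afe"
  by (auto simp: alpha_def shift_def)

lemma ps_alpha: "\<bar>x\<bar> < 1 \<Longrightarrow> ps alpha x = x * ps afe x"
  using sums_shift[OF R1_sums[OF R1_afe]] R1_sums[OF R1_alpha]
  by (metis alpha_eq sums_unique2)

lemma coeff_A:
  "real n * diffs alpha n - shift (\<lambda>n. real n * diffs alpha n) n - nfe * alpha n = 0"
proof (cases n)
  case 0 then show ?thesis by (simp add: shift_def alpha_def)
next
  case (Suc k)
  have d: "(real k + 1) * (real k + 2) \<noteq> 0" by simp
  have "afe (Suc k) * ((real k + 1) * (real k + 2)) = (real k * (real k + 1) + nfe) * afe k"
    unfolding afe.simps using d by (simp add: field_simps)
  then show ?thesis using Suc by (simp add: shift_def alpha_def diffs_def algebra_simps)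
qed

lemma ODE_A:
  assumes "\<bar>x\<bar> < 1"
  shows "x * (1 - x) * ps (diffs (diffs alpha)) x = nfe * ps alpha x"
proof -
  have s1: "(\<lambda>n. (real n * diffs alpha n) * x ^ n) sums (x * ps (diffs (diffs alpha)) x)"
    by (rule sums_n_times[OF R1_diffs[OF R1_alpha] assms])
  note s2 = sums_shift[OF s1]
  have s3: "(\<lambda>n. nfe * alpha n * x ^ n) sums (nfe * ps alpha x)"
    using sums_mult[OF R1_sums[OF R1_alpha assms], of nfe] by (simp add: algebra_simps)
  have "(\<lambda>n. (real n * diffs alpha n) * x ^ n - shift (\<lambda>n. real n * diffs alpha n) n * x ^ n
          - nfe * alpha n * x ^ n) sums
        (x * ps (diffs (diffs alpha)) x - x * (x * ps (diffs (diffs alpha)) x) - nfe * ps alpha x)"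
    by (intro sums_diff s1 s2 s3)
  moreover have "(\<lambda>n. (real n * diffs alpha n) * x ^ n - shift (\<lambda>n. real n * diffs alpha n) n * x ^ n
          - nfe * alpha n * x ^ n) = (\<lambda>n. 0)"
  proof
    fix n
    have "(real n * diffs alpha n) * x ^ n - shift (\<lambda>n. real n * diffs alpha n) n * x ^ n
          - nfe * alpha n * x ^ n = (real n * diffs alpha n - shift (\<lambda>n. real n * diffs alpha n) n - nfe * alpha n) * x ^ n"
      by (simp add: algebra_simps)
    then show "(real n * diffs alpha n) * x ^ n - shift (\<lambda>n. real n * diffs alpha n) n * x ^ n
          - nfe * alpha n * x ^ n = 0" by (simp add: coeff_A)
  qed
  ultimately have "x * ps (diffs (diffs alpha)) x - x * (x * ps (diffs (diffs alpha)) x) - nfe * ps alpha x = 0"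
    by (metis sums_zero sums_unique2)
  then show ?thesis by (simp add: algebra_simps)
qed

definition gco :: "nat \<Rightarrow> real" where "gco n = (2 * real n + 1) * afe n"

lemma R1_gco: "R1 gco"
  unfolding R1_def gco_def
proof (intro allI impI)
  fix x :: real assume x: "\<bar>x\<bar> < 1"
  show "summable (\<lambda>n. (2 * real n + 1) * afe n * x ^ n)"
  proof (rule summable_bounded_coeff[where C=2, OF x])
    fix n
    have "\<bar>(2 * real n + 1) * afe n\<bar> \<le> (2 * real n + 1) * 1"
      using afe_abs_le[of n] by (simp add: abs_mult mult_left_mono)
    thus "\<bar>(2 * real n + 1) * afe n\<bar> \<le> 2 * real (Suc n)" by simp
  qed
qed

lemma coeff_B:
  "real n * diffs bfe n - shift (\<lambda>n. real n * diffs bfe n) n - nfe * bfe n + gco n - shift gco n = 0"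
proof (cases n)
  case 0 then show ?thesis by (simp add: shift_def gco_def nfe_def diffs_def)
next
  case (Suc k)
  have "bfe (Suc (Suc k)) * (real (Suc k) * (real (Suc k) + 1)) =
     ((2 * real (Suc k) - 1) * afe k - (2 * real (Suc k) + 1) * afe (Suc k)
      + (real k * real (Suc k) + nfe) * bfe (Suc k))"
  proof -
    have d: "real (Suc k) * (real (Suc k) + 1) \<noteq> 0" by simp
    show ?thesis by (simp only: bfe.simps) (use d in \<open>simp add: field_simps\<close>)
  qed
  then show ?thesis using Suc
    by (simp add: shift_def gco_def diffs_def algebra_simps del: bfe.simps)
qed

lemma ODE_B:
  assumes "\<bar>x\<bar> < 1"
  shows "x * (1 - x) * ps (diffs (diffs bfe)) x - nfe * ps bfe x + (1 - x) * ps gco x = 0"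
proof -
  have s1: "(\<lambda>n. (real n * diffs bfe n) * x ^ n) sums (x * ps (diffs (diffs bfe)) x)"
    by (rule sums_n_times[OF R1_diffs[OF R1_bfe] assms])
  note s2 = sums_shift[OF s1]
  have s3: "(\<lambda>n. nfe * bfe n * x ^ n) sums (nfe * ps bfe x)"
    using sums_mult[OF R1_sums[OF R1_bfe assms], of nfe] by (simp add: algebra_simps)
  note s4 = R1_sums[OF R1_gco assms]
  note s5 = sums_shift[OF s4]
  have "(\<lambda>n. (real n * diffs bfe n) * x ^ n - shift (\<lambda>n. real n * diffs bfe n) n * x ^ n
          - nfe * bfe n * x ^ n + gco n * x ^ n - shift gco n * x ^ n) sums
        (x * ps (diffs (diffs bfe)) x - x * (x * ps (diffs (diffs bfe)) x) - nfe * ps bfe x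
          + ps gco x - x * ps gco x)"
    by (intro sums_diff sums_add s1 s2 s3 s4 s5)
  moreover have "(\<lambda>n. (real n * diffs bfe n) * x ^ n - shift (\<lambda>n. real n * diffs bfe n) n * x ^ n
          - nfe * bfe n * x ^ n + gco n * x ^ n - shift gco n * x ^ n) = (\<lambda>n. 0)"
  proof
    fix n
    have "(real n * diffs bfe n) * x ^ n - shift (\<lambda>n. real n * diffs bfe n) n * x ^ n
          - nfe * bfe n * x ^ n + gco n * x ^ n - shift gco n * x ^ n
        = (real n * diffs bfe n - shift (\<lambda>n. real n * diffs bfe n) n - nfe * bfe n + gco n - shift gco n) * x ^ n"
      by (simp add: algebra_simps)
    then show "(real n * diffs bfe n) * x ^ n - shift (\<lambda>n. real n * diffs bfe n) n * x ^ n
          - nfe * bfe n * x ^ n + gco n * x ^ n - shift gco n * x ^ n = 0" by (simp add: coeff_B)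
  qed
  ultimately have "x * ps (diffs (diffs bfe)) x - x * (x * ps (diffs (diffs bfe)) x) - nfe * ps bfe x
          + ps gco x - x * ps gco x = 0"
    by (metis sums_zero sums_unique2)
  then show ?thesis by (simp add: algebra_simps)
qed

lemma G_eq:
  assumes "\<bar>x\<bar> < 1"
  shows "x * ps (diffs afe) x + ps (diffs alpha) x = ps gco x"
proof -
  note s1 = sums_n_times[OF R1_afe assms]
  note s2 = R1_sums[OF R1_diffs[OF R1_alpha] assms]
  have "(\<lambda>n. (real n * afe n) * x ^ n + diffs alpha n * x ^ n) sums (x * ps (diffs afe) x + ps (diffs alpha) x)"
    by (intro sums_add s1 s2)
  moreover have "(\<lambda>n. (real n * afe n) * x ^ n + diffs alpha n * x ^ n) = (\<lambda>n. gco n * x ^ n)"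
    by (auto simp: diffs_def alpha_def gco_def algebra_simps)
  ultimately show ?thesis using R1_sums[OF R1_gco assms] by (metis sums_unique2)
qed


lemma ext_deriv:
  fixes f f' :: "real \<Rightarrow> real"
  assumes d: "\<And>x. 0 < x \<Longrightarrow> x < 1 \<Longrightarrow> (f has_real_derivative f' x) (at x)"
    and z: "0 < z" "z < 1"
  shows "((\<lambda>y. if y = 0 then 0 else f y) has_real_derivative f' z) (at z)"
  by (rule has_field_derivative_transform_within_open[OF d[OF z], of "{0<..}"])
     (use z in \<open>auto\<close>)

lemma ext_cont:
  fixes f f' :: "real \<Rightarrow> real"
  assumes d: "\<And>x. 0 < x \<Longrightarrow> x < 1 \<Longrightarrow> (f has_real_derivative f' x) (at x)"
    and l: "(f \<longlongrightarrow> 0) (at_right 0)"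
    and b: "0 < b" "b < 1"
  shows "continuous_on {0..b} (\<lambda>y. if y = 0 then 0 else f y)"
proof (rule continuous_on_IccI)
  let ?g = "\<lambda>y. if y = 0 then 0 else f y"
  have "(?g \<longlongrightarrow> 0) (at_right 0)"
    by (rule Lim_transform_within[OF l zero_less_one]) auto
  thus "(?g \<longlongrightarrow> ?g 0) (at_right 0)" by simp
  have "isCont ?g b" using ext_deriv[OF d b] by (rule DERIV_isCont)
  thus "(?g \<longlongrightarrow> ?g b) (at_left b)"
    by (simp add: isCont_def filterlim_at_split)
  fix x assume "0 < x" "x < b"
  hence "isCont ?g x" using ext_deriv[OF d, of x] b by (auto intro: DERIV_isCont)
  thus "?g \<midarrow>x\<rightarrow> ?g x" by (simp add: isCont_def)
qed fact

lemma ode_unique: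
  fixes D D1 D2 :: "real \<Rightarrow> real"
  assumes d1: "\<And>x. 0 < x \<Longrightarrow> x < 1 \<Longrightarrow> (D has_real_derivative D1 x) (at x)"
    and d2: "\<And>x. 0 < x \<Longrightarrow> x < 1 \<Longrightarrow> (D1 has_real_derivative D2 x) (at x)"
    and ode: "\<And>x. 0 < x \<Longrightarrow> x < 1 \<Longrightarrow> x * (1 - x) * D2 x = nfe * D x"
    and l0: "(D \<longlongrightarrow> 0) (at_right 0)" and l1: "(D1 \<longlongrightarrow> 0) (at_right 0)"
    and x: "0 < x" "x < 1"
  shows "D x = 0"
proof -
  define E where "E = (\<lambda>y. if y = 0 then 0 else D y)"
  define E1 where "E1 = (\<lambda>y. if y = 0 then 0 else D1 y)"
  have Ep1: "DERIV E z :> D1 z" if "0 < z" "z < 1" for z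
    unfolding E_def by (rule ext_deriv[OF d1 that])
  have E1p1: "DERIV E1 z :> D2 z" if "0 < z" "z < 1" for z
    unfolding E1_def by (rule ext_deriv[OF d2 that])
  have h: "(0::real) < 1/2" "(1/2::real) < 1" by auto
  have "continuous_on {0..1/2} (\<lambda>y. \<bar>E1 y\<bar>)"
    unfolding E1_def by (intro continuous_on_rabs ext_cont[OF d2 l1 h])
  then obtain xs where xs: "xs \<in> {0..1/2}" and xsmax: "\<And>y. y \<in> {0..1/2} \<Longrightarrow> \<bar>E1 y\<bar> \<le> \<bar>E1 xs\<bar>"
    using continuous_attains_sup[of "{0..1/2}" "\<lambda>y. \<bar>E1 y\<bar>"] by auto
  define M where "M = \<bar>E1 xs\<bar>"
  have M0: "0 \<le> M" by (simp add: M_def)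
  have cE: "continuous_on {0..y} E" if "0 < y" "y \<le> 1/2" for y
    unfolding E_def by (rule continuous_on_subset[OF ext_cont[OF d1 l0 h]]) (use that in auto)
  have cE1: "continuous_on {0..y} E1" if "0 < y" "y \<le> 1/2" for y
    unfolding E1_def by (rule continuous_on_subset[OF ext_cont[OF d2 l1 h]]) (use that in auto)
  have E1le: "\<bar>D1 z\<bar> \<le> M" if "0 < z" "z \<le> 1/2" for z
    using xsmax[of z] that by (simp add: M_def E1_def)
  have DM: "\<bar>D y\<bar> \<le> y * M" if y: "0 < y" "y \<le> 1/2" for y
  proof -
    obtain l z where z: "0 < z" "z < y" "DERIV E z :> l" "E y - E 0 = (y - 0) * l"
    proof -
      have "\<exists>l z. 0 < z \<and> z < y \<and> DERIV E z :> l \<and> E y - E 0 = (y - 0) * l"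
        by (rule MVT[OF y(1) cE[OF y]]) (use y in \<open>auto simp: real_differentiable_def intro!: exI Ep1\<close>)
      thus ?thesis using that by blast
    qed
    have "l = D1 z" using DERIV_unique[OF z(3) Ep1] z y by simp
    hence "\<bar>D y\<bar> = y * \<bar>D1 z\<bar>" using z y by (simp add: E_def abs_mult)
    also have "\<dots> \<le> y * M" using E1le[of z] z y by (intro mult_left_mono) auto
    finally show ?thesis .
  qed
  have M_zero: "M = 0"
  proof (cases "xs = 0")
    case True then show ?thesis by (simp add: M_def E1_def)
  next
    case False
    hence xs0: "0 < xs" "xs \<le> 1/2" using xs by auto
    obtain l z where z: "0 < z" "z < xs" "DERIV E1 z :> l" "E1 xs - E1 0 = (xs - 0) * l"
    proof -
      have "\<exists>l z. 0 < z \<and> z < xs \<and> DERIV E1 z :> l \<and> E1 xs - E1 0 = (xs - 0) * l"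
        by (rule MVT[OF xs0(1) cE1[OF xs0]]) (use xs0 in \<open>auto simp: real_differentiable_def intro!: exI E1p1\<close>)
      thus ?thesis using that by blast
    qed
    have l: "l = D2 z" using DERIV_unique[OF z(3) E1p1] z xs0 by simp
    have z1: "z < 1" "1 - z \<ge> 1/2" using z xs0 by auto
    have "z * (1 - z) * \<bar>D2 z\<bar> = \<bar>z * (1 - z) * D2 z\<bar>" using z z1 by (simp add: abs_mult)
    also have "\<dots> = \<bar>nfe * D z\<bar>" using ode[of z] z z1 by simp
    also have "\<dots> = nfe * \<bar>D z\<bar>" by (simp add: abs_mult nfe_def)
    also have "\<dots> \<le> nfe * (z * M)" using DM[of z] z xs0 by (intro mult_left_mono) (auto simp: nfe_def)
    finally have "z * (1 - z) * \<bar>D2 z\<bar> \<le> z * (nfe * M)" by (simp add: algebra_simps)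
    hence a: "(1 - z) * \<bar>D2 z\<bar> \<le> nfe * M" using z by (simp add: mult.assoc)
    have "(1/2) * \<bar>D2 z\<bar> \<le> (1 - z) * \<bar>D2 z\<bar>" using z1 by (intro mult_right_mono) auto
    with a have D2b: "\<bar>D2 z\<bar> \<le> 2 * nfe * M" by simp
    have "M = xs * \<bar>D2 z\<bar>" using z l xs0 by (simp add: M_def E1_def abs_mult)
    also have "\<dots> \<le> (1/2) * (2 * nfe * M)" using xs0 D2b by (intro mult_mono) (auto simp: nfe_def M0)
    finally have "M \<le> (3/16) * M" by (simp add: nfe_def)
    with M0 show ?thesis by simp
  qed
  have Dz: "D y = 0" if "0 < y" "y \<le> 1/2" for y using DM[OF that] M_zero by simp
  have D1z: "D1 y = 0" if "0 < y" "y \<le> 1/2" for y using E1le[OF that] M_zero by simp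
  show ?thesis
  proof (cases "x \<le> 1/2")
    case True then show ?thesis using Dz x by simp
  next
    case False
    hence x2: "1/2 < x" by simp
    define P where "P = 2 * nfe / (1 - x)"
    have P0: "0 \<le> P" using x by (simp add: P_def nfe_def)
    define F where "F = (\<lambda>y. (D y ^ 2 + D1 y ^ 2) * exp (- ((1 + P) * y)))"
    have "F (1/2) \<ge> F x"
    proof (rule DERIV_nonpos_imp_nonincreasing[of "1/2" x F])
      show "1/2 \<le> x" using x2 by simp
      fix y assume y: "1/2 \<le> y" "y \<le> x"
      hence y01: "0 < y" "y < 1" using x by auto
      let ?e = "exp (- ((1 + P) * y))"
      have "DERIV F y :> (2 * D y * D1 y + 2 * D1 y * D2 y) * ?e + (D y ^ 2 + D1 y ^ 2) * (?e * (- (1 + P)))"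
        unfolding F_def
        by (rule derivative_eq_intros d1[OF y01] d2[OF y01] refl | simp)+
      moreover have "(2 * D y * D1 y + 2 * D1 y * D2 y) * ?e + (D y ^ 2 + D1 y ^ 2) * (?e * (- (1 + P))) \<le> 0"
      proof -
        define p where "p = nfe / (y * (1 - y))"
        have D2p: "D2 y = p * D y" using ode[OF y01] y01 by (simp add: p_def field_simps)
        have p0: "0 \<le> p" using y01 by (simp add: p_def nfe_def)
        have "y * (1 - y) \<ge> (1/2) * (1 - x)" using y x by (intro mult_mono) auto
        hence pP: "p \<le> P" unfolding p_def P_def using y01 x
          by (simp add: divide_simps nfe_def)
        have "2 * D y * D1 y * (1 + p) \<le> (D y ^ 2 + D1 y ^ 2) * (1 + p)"
          by (intro mult_right_mono) (auto simp: p0 sum_squares_bound)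
        also have "\<dots> \<le> (D y ^ 2 + D1 y ^ 2) * (1 + P)"
          by (intro mult_left_mono) (auto simp: pP)
        finally have "2 * D y * D1 y + 2 * D1 y * D2 y - (1 + P) * (D y ^ 2 + D1 y ^ 2) \<le> 0"
          by (simp add: D2p algebra_simps)
        hence "(2 * D y * D1 y + 2 * D1 y * D2 y - (1 + P) * (D y ^ 2 + D1 y ^ 2)) * ?e \<le> 0"
          by (simp add: mult_nonpos_nonneg)
        thus ?thesis by (simp add: algebra_simps)
      qed
      ultimately show "\<exists>d. DERIV F y :> d \<and> d \<le> 0" by blast
    qed
    moreover have "F (1/2) = 0" using Dz[of "1/2"] D1z[of "1/2"] by (simp add: F_def)
    ultimately have "(D x ^ 2 + D1 x ^ 2) * exp (- ((1 + P) * x)) \<le> 0" by (simp add: F_def)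
    hence "D x ^ 2 + D1 x ^ 2 \<le> 0" by (simp add: mult_le_0_iff)
    thus ?thesis by (smt (verit) zero_le_power2 power_eq_0_iff)
  qed
qed


lemma Dpos: fixes m x :: real shows "m < 1 \<Longrightarrow> 0 < 1 - m * (sin x)^2"
proof -
  assume m: "m < 1"
  have s: "0 \<le> (sin x)^2" "(sin x)^2 \<le> 1" using abs_sin_le_one[of x] abs_square_le_1[of "sin x"] by auto
  show ?thesis
  proof (cases "m \<le> 0")
    case True then show ?thesis using s by (smt (verit) mult_nonpos_nonneg)
  next
    case False
    hence "m * (sin x)^2 \<le> m * 1" using s by (intro mult_left_mono) auto
    then show ?thesis using m by simp
  qed
qed

lemma g_alg:
  fixes r m s c :: real
  assumes r: "0 < r" "r^2 = 1 - m * s^2" and sc: "s^2 + c^2 = 1"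
  shows "((c * c - s * s) * m * r + m * (s * c) * (inverse r * (c * (s * m)))) / (1 - m * s^2)
       = r - (1 - m) / ((1 - m * s^2) * r)"
proof -
  show ?thesis unfolding r(2)[symmetric] using r(1)
    by (simp add: field_simps) (use r sc in algebra)
qed

lemma g_deriv:
  fixes m x :: real
  assumes m: "m < 1"
  shows "((\<lambda>x. m * (sin x * cos x / sqrt (1 - m * (sin x)^2))) has_real_derivative
     (sqrt (1 - m * (sin x)^2) - (1 - m) / ((1 - m * (sin x)^2) * sqrt (1 - m * (sin x)^2)))) (at x)"
proof -
  have D: "0 < 1 - m * (sin x)^2" by (rule Dpos[OF m])
  have alg: "((cos x * cos x - sin x * sin x) * m * sqrt (1 - m * (sin x)\<^sup>2) +
     m * (sin x * cos x) * (inverse (sqrt (1 - m * (sin x)\<^sup>2)) * (cos x * (sin x * m)))) /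
    (1 - m * (sin x)\<^sup>2) =
    sqrt (1 - m * (sin x)\<^sup>2) - (1 - m) / ((1 - m * (sin x)\<^sup>2) * sqrt (1 - m * (sin x)\<^sup>2))"
    by (rule g_alg) (use D in auto)
  show ?thesis
    using D by (auto intro!: derivative_eq_intros simp: alg)
qed

lemma integral_div_const:
  fixes f :: "real \<Rightarrow> real"
  shows "integral S (\<lambda>x. f x / c) = integral S f / c"
proof -
  have "(\<lambda>x. f x / c) = (\<lambda>x. (1/c) *\<^sub>R f x)" by auto
  thus ?thesis by simp
qed

lemma msin_ne: fixes m x :: real shows "m < 1 \<Longrightarrow> m * (sin x)^2 \<noteq> 1"
  using Dpos[of m x] by simp

lemma sqrtD_ne: fixes m x :: real shows "m < 1 \<Longrightarrow> sqrt (1 - m * (sin x)^2) \<noteq> 0"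
  using Dpos[of m x] by simp

lemma cont_1: fixes m :: real shows "m < 1 \<Longrightarrow> continuous_on S (\<lambda>x::real. 1 / sqrt (1 - m * (sin x)^2))"
  by (intro continuous_intros) (auto simp: sqrtD_ne msin_ne)

lemma cont_2: fixes m :: real shows "m < 1 \<Longrightarrow> continuous_on S (\<lambda>x::real. sqrt (1 - m * (sin x)^2))"
  by (intro continuous_intros)

lemma cont_3: fixes m :: real shows "m < 1 \<Longrightarrow> continuous_on S (\<lambda>x::real. 1 / ((1 - m * (sin x)^2) * sqrt (1 - m * (sin x)^2)))"
  by (intro continuous_intros) (auto simp: sqrtD_ne msin_ne)

definition I3 :: "real \<Rightarrow> real" where
  "I3 m = integral {0..pi/2} (\<lambda>x. 1 / ((1 - m * (sin x)^2) * sqrt (1 - m * (sin x)^2)))"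

lemma I3_eq:
  assumes m: "m < 1"
  shows "ellE m = (1 - m) * I3 m"
proof -
  have "((\<lambda>x. sqrt (1 - m * (sin x)^2) - (1 - m) / ((1 - m * (sin x)^2) * sqrt (1 - m * (sin x)^2)))
        has_integral (m * (sin (pi/2) * cos (pi/2) / sqrt (1 - m * (sin (pi/2))^2)) - m * (sin 0 * cos 0 / sqrt (1 - m * (sin 0)^2)))) {0..pi/2}"
  proof (rule fundamental_theorem_of_calculus)
    show "0 \<le> pi/2" by simp
    fix x :: real
    show "((\<lambda>x. m * (sin x * cos x / sqrt (1 - m * (sin x)^2))) has_vector_derivative
        (sqrt (1 - m * (sin x)^2) - (1 - m) / ((1 - m * (sin x)^2) * sqrt (1 - m * (sin x)^2)))) (at x within {0..pi/2})"
      using g_deriv[OF m, of x] unfolding has_real_derivative_iff_has_vector_derivative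
      by (rule has_vector_derivative_at_within)
  qed
  hence h: "((\<lambda>x. sqrt (1 - m * (sin x)^2) - (1 - m) * (1 / ((1 - m * (sin x)^2) * sqrt (1 - m * (sin x)^2))))
        has_integral 0) {0..pi/2}" by simp
  have i1: "(\<lambda>x. sqrt (1 - m * (sin x)^2)) integrable_on {0..pi/2}"
    by (intro integrable_continuous_interval cont_2 m)
  have i2: "(\<lambda>x. (1 - m) * (1 / ((1 - m * (sin x)^2) * sqrt (1 - m * (sin x)^2)))) integrable_on {0..pi/2}"
    by (intro integrable_continuous_interval continuous_intros) (use m in \<open>auto simp: sqrtD_ne msin_ne\<close>)
  have "integral {0..pi/2} (\<lambda>x. sqrt (1 - m * (sin x)^2) - (1 - m) * (1 / ((1 - m * (sin x)^2) * sqrt (1 - m * (sin x)^2)))) = 0"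
    using h by (rule integral_unique)
  hence "ellE m - integral {0..pi/2} (\<lambda>x. (1 - m) * (1 / ((1 - m * (sin x)^2) * sqrt (1 - m * (sin x)^2)))) = 0"
    by (subst (asm) integral_diff[OF i1 i2]) (simp add: ellE_def)
  moreover have "integral {0..pi/2} (\<lambda>x. (1 - m) * (1 / ((1 - m * (sin x)^2) * sqrt (1 - m * (sin x)^2)))) = (1 - m) * I3 m"
    unfolding I3_def by (subst integral_mult[symmetric]) (auto intro!: integrable_continuous_interval cont_3 m)
  ultimately show ?thesis by simp
qed

lemma dE:
  assumes m: "0 < m" "m < 1"
  shows "(ellE has_real_derivative (ellE m - ellK m) / (2 * m)) (at m)"
proof -
  let ?fx = "\<lambda>m x. - ((sin x)^2 / (2 * sqrt (1 - m * (sin x)^2)))"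
  have L: "((\<lambda>m. integral (cbox 0 (pi/2)) (\<lambda>x. sqrt (1 - m * (sin x)^2))) has_field_derivative
      integral (cbox 0 (pi/2)) (?fx m)) (at m within {..<1})"
  proof (rule leibniz_rule_field_derivative)
    fix m' x :: real assume "m' \<in> {..<1}" "x \<in> cbox 0 (pi/2)"
    hence D: "0 < 1 - m' * (sin x)^2" using Dpos by auto
    show "((\<lambda>m. sqrt (1 - m * (sin x)^2)) has_field_derivative ?fx m' x) (at m' within {..<1})"
      using D by (auto intro!: derivative_eq_intros simp: divide_simps)
  next
    fix m' :: real assume "m' \<in> {..<1}"
    thus "(\<lambda>x. sqrt (1 - m' * (sin x)^2)) integrable_on cbox 0 (pi/2)"
      by (intro integrable_continuous continuous_intros)
  next
    show "continuous_on ({..<1} \<times> cbox 0 (pi/2)) (\<lambda>(m, x). ?fx m x)"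
      unfolding case_prod_beta by (intro continuous_intros) (auto simp: sqrtD_ne msin_ne)
  qed (use m in auto)
  have eq: "?fx m x = (sqrt (1 - m * (sin x)^2) - 1 / sqrt (1 - m * (sin x)^2)) / (2 * m)" for x
  proof -
    have D: "0 < 1 - m * (sin x)^2" using Dpos m by auto
    show ?thesis using D m by (simp add: field_simps)
  qed
  have "integral (cbox 0 (pi/2)) (?fx m) = (ellE m - ellK m) / (2 * m)"
    unfolding eq cbox_interval ellE_def ellK_def integral_div_const
    by (subst integral_diff) (use m in \<open>auto intro!: integrable_continuous_interval cont_1 cont_2\<close>)
  with L show ?thesis
    unfolding ellE_def[abs_def] cbox_interval
    using at_within_open[of m "{..<1}"] m by auto
qed

lemma dK:
  assumes m: "0 < m" "m < 1"
  shows "(ellK has_real_derivative (ellE m / (1 - m) - ellK m) / (2 * m)) (at m)"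
proof -
  let ?fx = "\<lambda>m x. (sin x)^2 / (2 * ((1 - m * (sin x)^2) * sqrt (1 - m * (sin x)^2)))"
  have L: "((\<lambda>m. integral (cbox 0 (pi/2)) (\<lambda>x. 1 / sqrt (1 - m * (sin x)^2))) has_field_derivative
      integral (cbox 0 (pi/2)) (?fx m)) (at m within {..<1})"
  proof (rule leibniz_rule_field_derivative)
    fix m' x :: real assume "m' \<in> {..<1}" "x \<in> cbox 0 (pi/2)"
    hence D: "0 < 1 - m' * (sin x)^2" using Dpos by auto
    have s: "sqrt (1 - m' * (sin x)^2) * sqrt (1 - m' * (sin x)^2) = 1 - m' * (sin x)^2"
      using D by simp
    show "((\<lambda>m. 1 / sqrt (1 - m * (sin x)^2)) has_field_derivative ?fx m' x) (at m' within {..<1})"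
      using D by (auto intro!: derivative_eq_intros simp: divide_simps s)
  next
    fix m' :: real assume "m' \<in> {..<1}"
    thus "(\<lambda>x. 1 / sqrt (1 - m' * (sin x)^2)) integrable_on cbox 0 (pi/2)"
      by (intro integrable_continuous continuous_intros) (auto simp: sqrtD_ne msin_ne)
  next
    show "continuous_on ({..<1} \<times> cbox 0 (pi/2)) (\<lambda>(m, x). ?fx m x)"
      unfolding case_prod_beta by (intro continuous_intros) (auto simp: sqrtD_ne msin_ne)
  qed (use m in auto)
  have eq: "?fx m x = (1 / ((1 - m * (sin x)^2) * sqrt (1 - m * (sin x)^2)) - 1 / sqrt (1 - m * (sin x)^2)) / (2 * m)" for x
  proof -
    have D: "0 < 1 - m * (sin x)^2" using Dpos m by auto
    have gen: "q / (2 * (d * r)) = (1 / (d * r) - 1 / r) / (2 * m)"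
      if "0 < d" "r \<noteq> 0" "d = 1 - m * q" for q d r :: real
      using that m by (simp add: field_simps)
    show ?thesis by (rule gen) (use D in auto)
  qed
  have "integral (cbox 0 (pi/2)) (?fx m) = (I3 m - ellK m) / (2 * m)"
    unfolding eq cbox_interval I3_def ellK_def integral_div_const
    by (subst integral_diff) (use m in \<open>auto intro!: integrable_continuous_interval cont_1 cont_3\<close>)
  also have "\<dots> = (ellE m / (1 - m) - ellK m) / (2 * m)" using I3_eq[of m] m by simp
  finally have "integral (cbox 0 (pi/2)) (?fx m) = (ellE m / (1 - m) - ellK m) / (2 * m)" .
  with L show ?thesis
    unfolding ellK_def[abs_def] cbox_interval
    using at_within_open[of m "{..<1}"] m by auto
qed


lemma mfe_range: "0 < l \<Longrightarrow> l < 1 \<Longrightarrow> 0 < mfe l \<and> mfe l < 1"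
proof -
  assume l: "0 < l" "l < 1"
  hence t: "0 < sqrt l" "sqrt l < 1" by (auto simp: real_sqrt_lt_1_iff)
  have g: "0 < (1 - t) / (1 + t) \<and> (1 - t) / (1 + t) < 1" if "0 < t" "t < 1" for t :: real
    using that by (simp add: divide_simps)
  show ?thesis unfolding mfe_def by (rule g[OF t])
qed

lemma mfe_deriv:
  assumes l: "0 < l"
  shows "(mfe has_real_derivative - 1 / (sqrt l * (1 + sqrt l)^2)) (at l)"
proof -
  have t: "0 < sqrt l" using l by simp
  have nz: "1 + sqrt l \<noteq> 0" "\<not> 1 + sqrt l < 0" using t by linarith+
  show ?thesis unfolding mfe_def[abs_def]
    using t nz by (auto intro!: derivative_eq_intros simp: field_simps power2_eq_square)
qed

lemma v_alg0:
  fixes t u w E K :: real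
  assumes a: "w \<noteq> 0" "u \<noteq> 0" "t \<noteq> 0" and uw: "u = 1 + t" "w = 1 - t"
  shows "(E - t * K) / (4 * t) + u * ((E - K) / (2 * (w / u)) * (- 1 / (t * u^2))
        - (1 / (2 * t) * K + t * ((E / (2 * t / u) - K) / (2 * (w / u)) * (- 1 / (t * u^2))))) = - (3/4) * K"
  using a by (simp add: field_simps power2_eq_square) (use uw in algebra)

lemma v_alg:
  fixes t q E K :: real
  assumes t: "0 < t" "t < 1" and q: "0 < q" "q^2 = 1 + t"
  shows "(1 / (2 * t) / (2 * q)) * (E - t * K) +
     q * ((E - K) / (2 * ((1 - t) / (1 + t))) * (- 1 / (t * (1 + t)^2))
        - (1 / (2 * t) * K + t * ((E / (1 - (1 - t) / (1 + t)) - K) / (2 * ((1 - t) / (1 + t))) * (- 1 / (t * (1 + t)^2)))))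
     = - (3/4) * K / q"
proof -
  have a: "1 - t \<noteq> 0" "1 + t \<noteq> 0" "t \<noteq> 0" "q \<noteq> 0" using t q by auto
  have b: "1 - (1 - t) / (1 + t) = 2 * t / (1 + t)" using a by (simp add: field_simps)
  define X where "X = (E - K) / (2 * ((1 - t) / (1 + t))) * (- 1 / (t * (1 + t)^2))
        - (1 / (2 * t) * K + t * ((E / (1 - (1 - t) / (1 + t)) - K) / (2 * ((1 - t) / (1 + t))) * (- 1 / (t * (1 + t)^2))))"
  have X: "(E - t * K) / (4 * t) + (1 + t) * X = - (3/4) * K"
    unfolding X_def b by (rule v_alg0) (use a in auto)
  have "(1 / (2 * t) / (2 * q)) * (E - t * K) + q * X = ((E - t * K) / (4 * t) + q^2 * X) / q"
    using a by (simp add: field_simps power2_eq_square)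
  also have "\<dots> = - (3/4) * K / q" unfolding q(2) X ..
  finally show ?thesis unfolding X_def .
qed

definition vd :: "real \<Rightarrow> real" where
  "vd l = - (3/4) * ellK (mfe l) / sqrt (1 + sqrt l)"

lemma v_deriv:
  assumes l: "0 < l" "l < 1"
  shows "(vfe has_real_derivative vd l) (at l)"
proof -
  define t where "t = sqrt l"
  define q where "q = sqrt (1 + t)"
  define m where "m = mfe l"
  have t: "0 < t" "t < 1" using l by (auto simp: t_def real_sqrt_lt_1_iff)
  have q: "0 < q" "q^2 = 1 + t" using t by (auto simp: q_def)
  have m: "0 < m" "m < 1" using mfe_range[OF l] by (auto simp: m_def)
  have mt: "m = (1 - t) / (1 + t)" by (simp add: m_def mfe_def t_def)
  have ds: "DERIV sqrt l :> 1 / (2 * t)"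
    using DERIV_real_sqrt[of l] l by (simp add: t_def divide_simps mult.commute)
  have dq: "DERIV (\<lambda>l. sqrt (1 + sqrt l)) l :> 1 / (2 * t) / (2 * q)"
  proof -
    have p: "0 < 1 + sqrt l" using l by (simp add: add_pos_pos)
    have "DERIV (\<lambda>l. 1 + sqrt l) l :> 1 / (2 * t)"
      using DERIV_add[OF DERIV_const ds] by simp
    from DERIV_chain2[OF DERIV_real_sqrt[OF p] this] t
    show ?thesis by (simp add: q_def t_def divide_simps mult.commute)
  qed
  have hE: "DERIV (\<lambda>l. ellE (mfe l)) l :> (ellE m - ellK m) / (2 * m) * (- 1 / (t * (1 + t)^2))"
    using DERIV_chain2[OF dE[OF m, unfolded m_def] mfe_deriv[OF l(1)]] by (simp add: m_def t_def)
  have hK: "DERIV (\<lambda>l. ellK (mfe l)) l :> (ellE m / (1 - m) - ellK m) / (2 * m) * (- 1 / (t * (1 + t)^2))"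
    using DERIV_chain2[OF dK[OF m, unfolded m_def] mfe_deriv[OF l(1)]] by (simp add: m_def t_def)
  have hsK: "DERIV (\<lambda>l. sqrt l * ellK (mfe l)) l :>
      1 / (2 * t) * ellK m + t * ((ellE m / (1 - m) - ellK m) / (2 * m) * (- 1 / (t * (1 + t)^2)))"
    using DERIV_mult[OF ds hK] by (simp add: m_def t_def algebra_simps)
  have hv: "DERIV vfe l :> (1 / (2 * t) / (2 * q)) * (ellE m - t * ellK m) +
     q * ((ellE m - ellK m) / (2 * m) * (- 1 / (t * (1 + t)^2))
        - (1 / (2 * t) * ellK m + t * ((ellE m / (1 - m) - ellK m) / (2 * m) * (- 1 / (t * (1 + t)^2)))))"
    unfolding vfe_def[abs_def]
    using DERIV_mult[OF dq DERIV_diff[OF hE hsK]] by (simp add: m_def t_def q_def algebra_simps)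
  have "(1 / (2 * t) / (2 * q)) * (ellE m - t * ellK m) +
     q * ((ellE m - ellK m) / (2 * m) * (- 1 / (t * (1 + t)^2))
        - (1 / (2 * t) * ellK m + t * ((ellE m / (1 - m) - ellK m) / (2 * m) * (- 1 / (t * (1 + t)^2)))))
     = - (3/4) * ellK m / q"
    unfolding mt by (rule v_alg[OF t q])
  with hv show ?thesis by (simp add: vd_def m_def t_def q_def)
qed

lemma vdd_alg0:
  fixes t u w E K :: real
  assumes a: "w \<noteq> 0" "u \<noteq> 0" "t \<noteq> 0" and uw: "u = 1 + t" "w = 1 - t"
  shows "(- (3/4) * (((E / (2 * t / u) - K) / (2 * (w / u))) * (- 1 / (t * u^2))) + (3/4) * K / (4 * t * u)) / u
     = (3/16) * (E - t * K) / (t^2 * (w * u))"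
  using a by (simp add: field_simps power2_eq_square) (use uw in algebra)

lemma vdd_alg:
  fixes t q E K :: real
  assumes t: "0 < t" "t < 1" and q: "0 < q" "q^2 = 1 + t"
  shows "((- (3/4) * (((E / (1 - (1 - t) / (1 + t)) - K) / (2 * ((1 - t) / (1 + t)))) * (- 1 / (t * (1 + t)^2)))) * q
          - (- (3/4) * K) * (1 / (2 * t) / (2 * q))) / (q * q)
       = (3/16) * (q * (E - t * K)) / (t^2 * (1 - t^2))"
proof -
  have a: "1 - t \<noteq> 0" "1 + t \<noteq> 0" "t \<noteq> 0" "q \<noteq> 0" using t q by auto
  have b: "1 - (1 - t) / (1 + t) = 2 * t / (1 + t)" using a by (simp add: field_simps)
  have qq: "q * q = 1 + t" using q by (simp add: power2_eq_square)
  have c: "1 / (2 * t) / (2 * q) = q / (4 * t * (1 + t))"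
    using a by (simp add: field_simps flip: qq)
  have d: "1 - t^2 = (1 - t) * (1 + t)" by (simp add: algebra_simps power2_eq_square)
  define A where "A = ((E / (2 * t / (1 + t)) - K) / (2 * ((1 - t) / (1 + t)))) * (- 1 / (t * (1 + t)^2))"
  have "((- (3/4) * A) * q - (- (3/4) * K) * (q / (4 * t * (1 + t)))) / (1 + t)
        = q * ((- (3/4) * A + (3/4) * K / (4 * t * (1 + t))) / (1 + t))"
    using a by (simp add: field_simps)
  also have "(- (3/4) * A + (3/4) * K / (4 * t * (1 + t))) / (1 + t) = (3/16) * (E - t * K) / (t^2 * ((1 - t) * (1 + t)))"
    unfolding A_def by (rule vdd_alg0) (use a in auto)
  finally show ?thesis unfolding b c qq d A_def by simp
qed
lemma vd_deriv:
  assumes l: "0 < l" "l < 1"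
  shows "(vd has_real_derivative nfe * vfe l / (l * (1 - l))) (at l)"
proof -
  define t where "t = sqrt l"
  define q where "q = sqrt (1 + t)"
  define m where "m = mfe l"
  have t: "0 < t" "t < 1" using l by (auto simp: t_def real_sqrt_lt_1_iff)
  have q: "0 < q" "q^2 = 1 + t" using t by (auto simp: q_def)
  have m: "0 < m" "m < 1" using mfe_range[OF l] by (auto simp: m_def)
  have mt: "m = (1 - t) / (1 + t)" by (simp add: m_def mfe_def t_def)
  have ds: "DERIV sqrt l :> 1 / (2 * t)"
    using DERIV_real_sqrt[of l] l by (simp add: t_def divide_simps mult.commute)
  have dq: "DERIV (\<lambda>l. sqrt (1 + sqrt l)) l :> 1 / (2 * t) / (2 * q)"
  proof -
    have p: "0 < 1 + sqrt l" using l by (simp add: add_pos_pos)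
    have "DERIV (\<lambda>l. 1 + sqrt l) l :> 1 / (2 * t)"
      using DERIV_add[OF DERIV_const ds] by simp
    from DERIV_chain2[OF DERIV_real_sqrt[OF p] this] t
    show ?thesis by (simp add: q_def t_def divide_simps mult.commute)
  qed
  have hK: "DERIV (\<lambda>l. - (3/4) * ellK (mfe l)) l :> - (3/4) * ((ellE m / (1 - m) - ellK m) / (2 * m) * (- 1 / (t * (1 + t)^2)))"
    using DERIV_cmult[OF DERIV_chain2[OF dK[OF m, unfolded m_def] mfe_deriv[OF l(1)]], of "- (3/4)"]
    by (simp add: m_def t_def)
  have qnz: "sqrt (1 + sqrt l) \<noteq> 0" using q by (simp add: q_def t_def)
  have hv: "DERIV vd l :> ((- (3/4) * ((ellE m / (1 - m) - ellK m) / (2 * m) * (- 1 / (t * (1 + t)^2)))) * q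
          - (- (3/4) * ellK m) * (1 / (2 * t) / (2 * q))) / (q * q)"
    unfolding vd_def[abs_def]
    using DERIV_divide[OF hK dq qnz] by (simp add: m_def t_def q_def)
  have "((- (3/4) * ((ellE m / (1 - m) - ellK m) / (2 * m) * (- 1 / (t * (1 + t)^2)))) * q
          - (- (3/4) * ellK m) * (1 / (2 * t) / (2 * q))) / (q * q)
       = (3/16) * (q * (ellE m - t * ellK m)) / (t^2 * (1 - t^2))"
    unfolding mt by (rule vdd_alg[OF t q])
  also have "\<dots> = nfe * vfe l / (l * (1 - l))"
    using l by (simp add: nfe_def vfe_def m_def t_def q_def)
  finally show ?thesis using hv by simp
qed


lemma J_integral:
  assumes e: "0 < e"
  shows "((\<lambda>x. sin x / sqrt ((cos x)^2 + e)) has_integral (ln (1 + sqrt (1 + e)) - ln (sqrt e))) {0..pi/2}"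
proof -
  have pos: "0 < cos x + sqrt ((cos x)^2 + e)" for x :: real
  proof -
    have "\<bar>cos x\<bar> < sqrt ((cos x)^2 + e)"
      using e by (intro real_less_rsqrt) (simp add: power2_abs)
    thus ?thesis by linarith
  qed
  have "((\<lambda>x. sin x / sqrt ((cos x)^2 + e)) has_integral
      ((- ln (cos (pi/2) + sqrt ((cos (pi/2))^2 + e))) - (- ln (cos 0 + sqrt ((cos 0)^2 + e))))) {0..pi/2}"
  proof (rule fundamental_theorem_of_calculus)
    show "0 \<le> pi/2" by simp
    fix x :: real
    have s: "0 < (cos x)^2 + e" using e by (simp add: add_nonneg_pos)
    have r: "sqrt ((cos x)^2 + e) \<noteq> 0" using s by simp
    have "((\<lambda>x. - ln (cos x + sqrt ((cos x)^2 + e))) has_real_derivative sin x / sqrt ((cos x)^2 + e)) (at x)"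
    proof -
      have g: "- ((- s' - inverse A * (s' * c)) / (c + A)) = s' / A" if "A \<noteq> 0" "c + A \<noteq> 0" for s' c A :: real
      proof -
        have "- s' - inverse A * (s' * c) = - s' * (c + A) / A" using that by (simp add: field_simps)
        thus ?thesis using that by simp
      qed
      show ?thesis using pos[of x] s r
        by (auto intro!: derivative_eq_intros simp: g)
    qed
    thus "((\<lambda>x. - ln (cos x + sqrt ((cos x)^2 + e))) has_vector_derivative sin x / sqrt ((cos x)^2 + e)) (at x within {0..pi/2})"
      unfolding has_real_derivative_iff_has_vector_derivative by (rule has_vector_derivative_at_within)
  qed
  thus ?thesis by simp
qed

lemma h_integral: "((\<lambda>x. cos x / (1 + sin x)) has_integral ln 2) {0..pi/2}"
proof -
  have "((\<lambda>x. cos x / (1 + sin x)) has_integral (ln (1 + sin (pi/2)) - ln (1 + sin 0))) {0..pi/2}"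
  proof (rule fundamental_theorem_of_calculus)
    show "0 \<le> pi/2" by simp
    fix x :: real assume x: "x \<in> {0..pi/2}"
    hence "0 \<le> sin x" by (auto intro!: sin_ge_zero)
    hence p: "0 < 1 + sin x" by linarith
    have "((\<lambda>x. ln (1 + sin x)) has_real_derivative cos x / (1 + sin x)) (at x)"
      using p by (auto intro!: derivative_eq_intros simp: field_simps)
    thus "((\<lambda>x. ln (1 + sin x)) has_vector_derivative cos x / (1 + sin x)) (at x within {0..pi/2})"
      unfolding has_real_derivative_iff_has_vector_derivative by (rule has_vector_derivative_at_within)
  qed
  thus ?thesis by simp
qed

lemma bound_gen:
  fixes s c e :: real
  assumes s: "0 \<le> s" and c: "0 \<le> c" and sc: "s^2 + c^2 = 1" and e: "0 < e"
  shows "0 \<le> 1 / sqrt (c^2 + e * s^2) - s / sqrt (c^2 + e)"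
    and "1 / sqrt (c^2 + e * s^2) - s / sqrt (c^2 + e) \<le> c"
proof -
  define A where "A = sqrt (c^2 + e)"
  define B where "B = sqrt (c^2 + e * s^2)"
  have s1: "s \<le> 1" using sc c by (smt (verit) power2_le_imp_le zero_le_power2 one_power2)
  have c1: "c \<le> 1" using sc s by (smt (verit) power2_le_imp_le zero_le_power2 one_power2)
  have A0: "0 < A" unfolding A_def using e by (simp add: add_nonneg_pos)
  have B0: "0 < B" unfolding B_def
  proof -
    have "0 < c^2 + e * s^2"
    proof (cases "s = 0")
      case True then show ?thesis using sc by simp
    next
      case False then show ?thesis using e by (simp add: add_nonneg_pos)
    qed
    thus "0 < sqrt (c^2 + e * s^2)" by simp
  qed
  have BA: "B \<le> A" unfolding A_def B_def
    by (rule real_sqrt_le_mono) (use e s1 s in \<open>simp add: mult_left_le_one_le power_le_one\<close>)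
  have sAB: "s * A \<le> B"
  proof -
    have "(s * A)^2 = s^2 * (c^2 + e)" using e by (simp add: A_def power_mult_distrib add_nonneg_nonneg)
    also have "\<dots> \<le> c^2 + e * s^2"
    proof -
      have "s^2 * c^2 \<le> c^2" using s1 s by (simp add: mult_left_le_one_le power_le_one)
      thus ?thesis by (simp add: algebra_simps)
    qed
    also have "\<dots> = B^2" using B0 by (simp add: B_def)
    finally have "(s * A)^2 \<le> B^2" .
    thus ?thesis using B0 by (simp add: power2_le_iff_abs_le)
  qed
  have cB: "c \<le> B"
  proof -
    have "c^2 \<le> c^2 + e * s^2" using e by simp
    thus ?thesis unfolding B_def using c by (simp add: real_le_rsqrt)
  qed
  have eq: "1 / B - s / A = (A - s * B) / (A * B)" using A0 B0 by (simp add: field_simps)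
  have n1: "0 \<le> A - s * B"
  proof -
    have "s * B \<le> 1 * B" using s1 B0 by (intro mult_right_mono) auto
    thus ?thesis using BA by simp
  qed
  have n2: "A - s * B \<le> c^2 * A"
  proof -
    have "s * (s * A) \<le> s * B" using sAB s by (rule mult_left_mono)
    hence "A - s * B \<le> A - s^2 * A" by (simp add: power2_eq_square algebra_simps)
    also have "\<dots> = c^2 * A" using sc by algebra
    finally show ?thesis .
  qed
  show "0 \<le> 1 / sqrt (c^2 + e * s^2) - s / sqrt (c^2 + e)"
    unfolding A_def[symmetric] B_def[symmetric] eq using n1 A0 B0 by simp
  have "(A - s * B) / (A * B) \<le> c^2 * A / (A * B)"
    using n2 A0 B0 by (intro divide_right_mono) auto
  also have "\<dots> = c^2 / B" using A0 by simp
  also have "\<dots> \<le> c"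
  proof -
    have "c^2 \<le> c * B" using cB c by (simp add: power2_eq_square mult_left_mono)
    thus ?thesis using B0 by (simp add: divide_le_eq)
  qed
  finally show "1 / sqrt (c^2 + e * s^2) - s / sqrt (c^2 + e) \<le> c"
    unfolding A_def[symmetric] B_def[symmetric] eq .
qed

lemma cos_sin_range:
  fixes x :: real assumes "x \<in> {0..pi/2}"
  shows "0 \<le> sin x" "0 \<le> cos x"
  using assms by (auto intro!: sin_ge_zero cos_ge_zero)

definition fK :: "real \<Rightarrow> real \<Rightarrow> real" where
  "fK e x = 1 / sqrt (1 - (1 - e) * (sin x)^2) - sin x / sqrt ((cos x)^2 + e)"

lemma fK_alt: fixes e x :: real shows "1 - (1 - e) * (sin x)^2 = (cos x)^2 + e * (sin x)^2"
proof -
  have "(sin x)^2 + (cos x)^2 = 1" by (rule sin_cos_squared_add)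
  thus ?thesis by algebra
qed

lemma fK_bound:
  assumes e: "0 < e" and x: "x \<in> {0..pi/2}"
  shows "\<bar>fK e x\<bar> \<le> 1"
proof -
  note cs = cos_sin_range[OF x]
  have "0 \<le> fK e x" "fK e x \<le> cos x"
    unfolding fK_def fK_alt using bound_gen[OF cs(1) cs(2) _ e] by auto
  moreover have "cos x \<le> 1" by (rule cos_le_one)
  ultimately show ?thesis by linarith
qed

lemma fK_lim:
  assumes S: "S \<longlonglongrightarrow> 0" "\<And>n. 0 < S n" and x: "x \<in> {0..pi/2}"
  shows "(\<lambda>n. fK (S n) x) \<longlonglongrightarrow> cos x / (1 + sin x)"
proof (cases "cos x = 0")
  case True
  have "sin x = 1"
  proof -
    have "(sin x)^2 = 1" using True sin_cos_squared_add[of x] by simp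
    thus ?thesis using cos_sin_range(1)[OF x] by (smt (verit) power2_eq_1_iff)
  qed
  hence "fK (S n) x = 0" for n using True by (simp add: fK_def)
  thus ?thesis using True by simp
next
  case False
  note cs = cos_sin_range[OF x]
  have c0: "0 < cos x" using False cs by simp
  have sn: "(sin x)^2 \<noteq> 1"
  proof
    assume "(sin x)^2 = 1"
    hence "(cos x)^2 = 0" using sin_cos_squared_add[of x] by simp
    thus False using c0 by simp
  qed
  have "(\<lambda>n. fK (S n) x) \<longlonglongrightarrow> 1 / sqrt (1 - (1 - 0) * (sin x)^2) - sin x / sqrt ((cos x)^2 + 0)"
    unfolding fK_def using sn by (intro tendsto_intros S(1)) (use c0 in \<open>auto simp: fK_alt\<close>)
  also have "1 / sqrt (1 - (1 - 0) * (sin x)^2) - sin x / sqrt ((cos x)^2 + 0) = cos x / (1 + sin x)"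
  proof -
    have a: "1 - (1 - 0) * (sin x)^2 = (cos x)^2" by (simp add: cos_squared_eq)
    have b: "1 + sin x \<noteq> 0" using cs by linarith
    have "(1 - sin x) * (1 + sin x) = (cos x)^2" by (simp add: cos_squared_eq algebra_simps power2_eq_square)
    thus ?thesis unfolding a using c0 b by (simp add: field_simps)
  qed
  finally show ?thesis .
qed

lemma K_asym:
  "((\<lambda>e. ellK (1 - e) - (ln (1 + sqrt (1 + e)) - ln (sqrt e))) \<longlongrightarrow> ln 2) (at_right 0)"
proof (rule tendsto_at_right_sequentially[where b=1])
  show "(0::real) < 1" by simp
  fix S :: "nat \<Rightarrow> real"
  assume S: "\<And>n. 0 < S n" "\<And>n. S n < 1" "decseq S" "S \<longlonglongrightarrow> 0"
  have int: "integral {0..pi/2} (fK (S n)) = ellK (1 - S n) - (ln (1 + sqrt (1 + S n)) - ln (sqrt (S n)))" for n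
  proof -
    have i1: "(\<lambda>x. 1 / sqrt (1 - (1 - S n) * (sin x)^2)) integrable_on {0..pi/2}"
      by (intro integrable_continuous_interval cont_1) (use S in auto)
    note J = J_integral[OF S(1)[of n]]
    show ?thesis unfolding fK_def[abs_def]
      by (subst integral_diff[OF i1 has_integral_integrable[OF J]])
         (simp add: ellK_def integral_unique[OF J])
  qed
  have "(\<lambda>n. integral {0..pi/2} (fK (S n))) \<longlonglongrightarrow> integral {0..pi/2} (\<lambda>x. cos x / (1 + sin x))"
  proof (rule dominated_convergence(2)[where h="\<lambda>_. 1"])
    fix n
    show "fK (S n) integrable_on {0..pi/2}"
    proof -
      have i1: "(\<lambda>x. 1 / sqrt (1 - (1 - S n) * (sin x)^2)) integrable_on {0..pi/2}"
        by (intro integrable_continuous_interval cont_1) (use S in auto)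
      note J = J_integral[OF S(1)[of n]]
      show ?thesis unfolding fK_def[abs_def]
        by (rule integrable_diff[OF i1 has_integral_integrable[OF J]])
    qed
  next
    show "(\<lambda>_. 1::real) integrable_on {0..pi/2}" by (rule integrable_continuous_interval) simp
  next
    fix n x assume "x \<in> {0..pi/2}"
    thus "norm (fK (S n) x) \<le> 1" using fK_bound[OF S(1)] by simp
  next
    fix x :: real assume "x \<in> {0..pi/2}"
    thus "(\<lambda>n. fK (S n) x) \<longlonglongrightarrow> cos x / (1 + sin x)" by (rule fK_lim[OF S(4) S(1)])
  qed
  thus "(\<lambda>n. ellK (1 - S n) - (ln (1 + sqrt (1 + S n)) - ln (sqrt (S n)))) \<longlonglongrightarrow> ln 2"
    unfolding int integral_unique[OF h_integral] .
qed


lemma E_bound: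
  assumes m: "0 < m" "m < 1"
  shows "\<bar>ellE m - 1\<bar> \<le> pi / 2 * sqrt (1 - m)"
proof -
  let ?g = "\<lambda>x. sqrt (1 - m * (sin x)^2) - cos x"
  have i1: "(\<lambda>x. sqrt (1 - m * (sin x)^2)) integrable_on {0..pi/2}"
    by (intro integrable_continuous_interval cont_2) (use m in auto)
  have i2: "cos integrable_on {0..pi/2}"
    by (intro integrable_continuous_interval continuous_intros)
  have ig: "?g integrable_on {0..pi/2}" by (rule integrable_diff[OF i1 i2])
  have eq: "ellE m - 1 = integral {0..pi/2} ?g"
    unfolding ellE_def by (subst integral_diff[OF i1 i2]) simp
  have gb: "0 \<le> ?g x \<and> ?g x \<le> sqrt (1 - m)" if x: "x \<in> {0..pi/2}" for x
  proof -
    have c: "0 \<le> cos x" using x by (auto intro!: cos_ge_zero)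
    have cs: "cos x = sqrt (1 - (sin x)^2)" using c by (simp add: cos_squared_eq[symmetric])
    have s1: "(sin x)^2 \<le> 1" by (simp add: abs_square_le_1 abs_sin_le_one)
    have a: "1 - (sin x)^2 \<le> 1 - m * (sin x)^2"
      using m s1 by (simp add: mult_left_le_one_le)
    have b: "0 \<le> 1 - (sin x)^2" using s1 by simp
    have "sqrt (1 - m * (sin x)^2) \<le> sqrt (1 - (sin x)^2) + sqrt ((1 - m * (sin x)^2) - (1 - (sin x)^2))"
      using sqrt_add_le_add_sqrt[OF b, of "(1 - m * (sin x)^2) - (1 - (sin x)^2)"] a by simp
    moreover have "sqrt ((1 - m * (sin x)^2) - (1 - (sin x)^2)) \<le> sqrt (1 - m)"
    proof (rule real_sqrt_le_mono)
      have "(1 - m) * (sin x)^2 \<le> (1 - m) * 1" using m s1 by (intro mult_left_mono) auto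
      thus "(1 - m * (sin x)^2) - (1 - (sin x)^2) \<le> 1 - m" by (simp add: algebra_simps)
    qed
    moreover have "sqrt (1 - (sin x)^2) \<le> sqrt (1 - m * (sin x)^2)" using a by simp
    ultimately show ?thesis unfolding cs by linarith
  qed
  have "0 \<le> integral {0..pi/2} ?g" by (rule integral_nonneg[OF ig]) (use gb in auto)
  moreover have "integral {0..pi/2} ?g \<le> integral {0..pi/2} (\<lambda>x. sqrt (1 - m))"
    by (rule integral_le[OF ig]) (use gb in auto)
  ultimately show ?thesis unfolding eq by simp
qed

definition Jx :: "real \<Rightarrow> real" where
  "Jx x = ln (1 + sqrt (1 + (1 - mfe x))) - ln (sqrt (1 - mfe x))"

lemma Kcomp: "((\<lambda>x. ellK (mfe x) - Jx x) \<longlongrightarrow> ln 2) (at_right 0)"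
proof -
  have F: "filterlim (\<lambda>x. 1 - mfe x) (at_right 0) (at_right 0)"
    unfolding mfe_def by real_asymp
  from filterlim_compose[OF K_asym F] show ?thesis by (simp add: Jx_def)
qed

lemma ev01: "eventually (\<lambda>x. 0 < x \<and> x < (1::real)) (at_right 0)"
  by (rule eventually_at_rightI[of 0 1]) auto

lemma vd_lim: "((\<lambda>x. vd x - nfe * ln x) \<longlongrightarrow> - (9/8) * ln 2) (at_right 0)"
proof -
  have C: "((\<lambda>x. - (3/4) * Jx x / sqrt (1 + sqrt x) - 3/16 * ln x) \<longlongrightarrow> - (3/8) * ln 2) (at_right 0)"
    unfolding Jx_def mfe_def by real_asymp
  have q: "((\<lambda>x::real. sqrt (1 + sqrt x)) \<longlongrightarrow> 1) (at_right 0)" by real_asymp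
  have A: "((\<lambda>x. - (3/4) * (ellK (mfe x) - Jx x) / sqrt (1 + sqrt x)) \<longlongrightarrow> - (3/4) * ln 2 / 1) (at_right 0)"
    by (intro tendsto_intros Kcomp q) simp
  have "((\<lambda>x. - (3/4) * (ellK (mfe x) - Jx x) / sqrt (1 + sqrt x) + (- (3/4) * Jx x / sqrt (1 + sqrt x) - 3/16 * ln x))
        \<longlongrightarrow> - (3/4) * ln 2 / 1 + - (3/8) * ln 2) (at_right 0)"
    by (rule tendsto_add[OF A C])
  moreover have "(\<lambda>x. - (3/4) * (ellK (mfe x) - Jx x) / sqrt (1 + sqrt x) + (- (3/4) * Jx x / sqrt (1 + sqrt x) - 3/16 * ln x))
      = (\<lambda>x. vd x - nfe * ln x)"
    by (rule ext) (simp add: vd_def nfe_def diff_divide_distrib add_divide_distrib algebra_simps)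
  ultimately show ?thesis by simp
qed

lemma v_lim: "(vfe \<longlongrightarrow> 1) (at_right 0)"
proof -
  have E: "((\<lambda>x. ellE (mfe x)) \<longlongrightarrow> 1) (at_right 0)"
  proof -
    have "((\<lambda>x. ellE (mfe x) - 1) \<longlongrightarrow> 0) (at_right 0)"
    proof (rule Lim_null_comparison)
      show "\<forall>\<^sub>F x in at_right 0. norm (ellE (mfe x) - 1) \<le> pi / 2 * sqrt (1 - mfe x)"
        using ev01 by eventually_elim (use mfe_range E_bound in auto)
      show "((\<lambda>x. pi / 2 * sqrt (1 - mfe x)) \<longlongrightarrow> 0) (at_right 0)"
        unfolding mfe_def by real_asymp
    qed
    thus ?thesis by (simp add: LIM_zero_iff)
  qed
  have SJ: "((\<lambda>x. sqrt x * Jx x) \<longlongrightarrow> 0) (at_right 0)"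
    unfolding Jx_def mfe_def by real_asymp
  have s0: "((\<lambda>x::real. sqrt x) \<longlongrightarrow> 0) (at_right 0)" by real_asymp
  have q: "((\<lambda>x::real. sqrt (1 + sqrt x)) \<longlongrightarrow> 1) (at_right 0)" by real_asymp
  have "((\<lambda>x. sqrt (1 + sqrt x) * (ellE (mfe x) - (sqrt x * (ellK (mfe x) - Jx x) + sqrt x * Jx x)))
       \<longlongrightarrow> 1 * (1 - (0 * ln 2 + 0))) (at_right 0)"
    by (intro tendsto_intros q E s0 Kcomp SJ)
  moreover have "(\<lambda>x. sqrt (1 + sqrt x) * (ellE (mfe x) - (sqrt x * (ellK (mfe x) - Jx x) + sqrt x * Jx x))) = vfe"
    by (rule ext) (simp add: vfe_def algebra_simps)
  ultimately show ?thesis by simp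
qed


definition W :: "real \<Rightarrow> real" where
  "W x = - (9/8) * ln 2 * ps alpha x + nfe * ps bfe x + nfe * ln x * ps alpha x"
definition Wd :: "real \<Rightarrow> real" where
  "Wd x = - (9/8) * ln 2 * ps (diffs alpha) x + nfe * ps (diffs bfe) x
          + nfe * (ps afe x + ln x * ps (diffs alpha) x)"
definition Wdd :: "real \<Rightarrow> real" where
  "Wdd x = - (9/8) * ln 2 * ps (diffs (diffs alpha)) x + nfe * ps (diffs (diffs bfe)) x
          + nfe * (ps (diffs afe) x + (inverse x * ps (diffs alpha) x + ps (diffs (diffs alpha)) x * ln x))"

lemma W_deriv:
  assumes x: "0 < x" "x < 1"
  shows "(W has_real_derivative Wd x) (at x)"
proof -
  have ax: "\<bar>x\<bar> < 1" using x by simp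
  note dA = R1_deriv[OF R1_alpha ax] and dB = R1_deriv[OF R1_bfe ax]
  note h1 = DERIV_cmult[OF dA, of "- (9/8) * ln 2"]
  note h2 = DERIV_cmult[OF dB, of nfe]
  note hl = DERIV_cmult[OF DERIV_ln[OF x(1)], of nfe]
  note h3 = DERIV_mult[OF hl dA]
  note h = DERIV_add[OF DERIV_add[OF h1 h2] h3]
  have e: "inverse x * ps alpha x = ps afe x" using ps_alpha[OF ax] x by simp
  have "- (9/8) * ln 2 * ps (diffs alpha) x + nfe * ps (diffs bfe) x +
        (nfe * inverse x * ps alpha x + ps (diffs alpha) x * (nfe * ln x)) = Wd x"
    unfolding Wd_def e[symmetric] by (simp add: algebra_simps)
  with h show ?thesis unfolding W_def[abs_def] by (simp only: mult.assoc)
qed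

lemma Wd_deriv:
  assumes x: "0 < x" "x < 1"
  shows "(Wd has_real_derivative Wdd x) (at x)"
proof -
  have ax: "\<bar>x\<bar> < 1" using x by simp
  note dA = R1_deriv[OF R1_diffs[OF R1_alpha] ax] and dB = R1_deriv[OF R1_diffs[OF R1_bfe] ax]
    and dA0 = R1_deriv[OF R1_afe ax]
  note h1 = DERIV_cmult[OF dA, of "- (9/8) * ln 2"]
  note h2 = DERIV_cmult[OF dB, of nfe]
  note h3 = DERIV_mult[OF DERIV_ln[OF x(1)] dA]
  note h4 = DERIV_cmult[OF DERIV_add[OF dA0 h3], of nfe]
  note h = DERIV_add[OF DERIV_add[OF h1 h2] h4]
  have "- (9/8) * ln 2 * ps (diffs (diffs alpha)) x + nfe * ps (diffs (diffs bfe)) x +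
        nfe * (ps (diffs afe) x + (inverse x * ps (diffs alpha) x + ps (diffs (diffs alpha)) x * ln x)) = Wdd x"
    unfolding Wdd_def ..
  with h show ?thesis unfolding Wd_def[abs_def] by (simp only: mult.assoc)
qed

lemma W_ode:
  assumes x: "0 < x" "x < 1"
  shows "x * (1 - x) * Wdd x = nfe * W x"
proof -
  have ax: "\<bar>x\<bar> < 1" using x by simp
  note hA = ODE_A[OF ax] and hB = ODE_B[OF ax] and hG = G_eq[OF ax]
  define A2 where "A2 = ps (diffs (diffs alpha)) x"
  define B2 where "B2 = ps (diffs (diffs bfe)) x"
  define A0d where "A0d = ps (diffs afe) x"
  define A1 where "A1 = ps (diffs alpha) x"
  have e1: "x * (1 - x) * (A0d + inverse x * A1) = (1 - x) * ps gco x"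
    using x hG unfolding A0d_def A1_def by (simp add: field_simps)
  have "x * (1 - x) * Wdd x = - (9/8) * ln 2 * (x * (1 - x) * A2)
        + nfe * (x * (1 - x) * B2)
        + nfe * (x * (1 - x) * (A0d + inverse x * A1))
        + nfe * ln x * (x * (1 - x) * A2)"
    unfolding Wdd_def A2_def[symmetric] B2_def[symmetric] A0d_def[symmetric] A1_def[symmetric]
    by (simp add: algebra_simps)
  also have "\<dots> = - (9/8) * ln 2 * (nfe * ps alpha x)
        + nfe * (nfe * ps bfe x - (1 - x) * ps gco x)
        + nfe * ((1 - x) * ps gco x)
        + nfe * ln x * (nfe * ps alpha x)"
  proof -
    have hB': "x * (1 - x) * B2 = nfe * ps bfe x - (1 - x) * ps gco x"
      using hB unfolding B2_def by linarith
    show ?thesis unfolding e1 hB' A2_def hA ..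
  qed
  also have "\<dots> = nfe * W x" unfolding W_def by (simp add: algebra_simps)
  finally show ?thesis .
qed

lemma ps_cont0: "R1 c \<Longrightarrow> (ps c \<longlongrightarrow> c 0) (at_right 0)"
proof -
  assume c: "R1 c"
  have "isCont (ps c) 0" by (rule DERIV_isCont[OF R1_deriv[OF c]]) simp
  hence "(ps c \<longlongrightarrow> ps c 0) (at 0)" by (simp add: isCont_def)
  thus ?thesis unfolding ps_zero by (rule filterlim_mono) (auto simp: at_le)
qed

lemma xlnx: "((\<lambda>x::real. x * ln x) \<longlongrightarrow> 0) (at_right 0)" by real_asymp

lemma W_lim: "(W \<longlongrightarrow> 1) (at_right 0)"
proof -
  have L: "((\<lambda>x. - (9/8) * ln 2 * ps alpha x + nfe * ps bfe x + nfe * ((x * ln x) * ps afe x))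
      \<longlongrightarrow> - (9/8) * ln 2 * alpha 0 + nfe * bfe 0 + nfe * (0 * afe 0)) (at_right 0)"
    by (rule tendsto_add[OF tendsto_add[OF tendsto_mult[OF tendsto_const ps_cont0[OF R1_alpha]]
          tendsto_mult[OF tendsto_const ps_cont0[OF R1_bfe]]]
          tendsto_mult[OF tendsto_const tendsto_mult[OF xlnx ps_cont0[OF R1_afe]]]])
  have v: "- (9/8) * ln 2 * alpha 0 + nfe * bfe 0 + nfe * (0 * afe 0) = 1"
    by (simp add: alpha_def nfe_def)
  have ev: "\<forall>\<^sub>F x in at_right 0. - (9/8) * ln 2 * ps alpha x + nfe * ps bfe x + nfe * ((x * ln x) * ps afe x) = W x"
    using ev01
  proof eventually_elim
    case (elim x)
    hence "ps alpha x = x * ps afe x" by (intro ps_alpha) simp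
    thus ?case unfolding W_def by (simp only: mult.assoc mult.left_commute)
  qed
  show ?thesis using Lim_transform_eventually[OF L ev] unfolding v .
qed

lemma Wd_lim: "((\<lambda>x. Wd x - nfe * ln x) \<longlongrightarrow> - (9/8) * ln 2) (at_right 0)"
proof -
  have A1: "R1 (diffs alpha)" by (rule R1_diffs[OF R1_alpha])
  have p0: "ps (diffs alpha) 0 = 1" by (simp add: ps_zero diffs_def alpha_def)
  have d0: "(ps (diffs alpha) has_real_derivative ps (diffs (diffs alpha)) 0) (at 0)"
    by (rule R1_deriv[OF A1]) simp
  have d: "((\<lambda>y. (ps (diffs alpha) y - ps (diffs alpha) 0) / (y - 0)) \<longlongrightarrow> ps (diffs (diffs alpha)) 0) (at 0)"
    using d0 unfolding has_field_derivative_iff .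
  have d': "((\<lambda>h. (ps (diffs alpha) h - 1) / h) \<longlongrightarrow> ps (diffs (diffs alpha)) 0) (at_right 0)"
    using d unfolding p0 diff_zero by (rule filterlim_mono) (auto simp: at_le)
  have L: "((\<lambda>x. - (9/8) * ln 2 * ps (diffs alpha) x + nfe * ps (diffs bfe) x + nfe * ps afe x
        + nfe * ((x * ln x) * ((ps (diffs alpha) x - 1) / x)))
      \<longlongrightarrow> - (9/8) * ln 2 * diffs alpha 0 + nfe * diffs bfe 0 + nfe * afe 0 + nfe * (0 * ps (diffs (diffs alpha)) 0)) (at_right 0)"
    by (rule tendsto_add[OF tendsto_add[OF tendsto_add[OF tendsto_mult[OF tendsto_const ps_cont0[OF A1]]
          tendsto_mult[OF tendsto_const ps_cont0[OF R1_diffs[OF R1_bfe]]]]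
          tendsto_mult[OF tendsto_const ps_cont0[OF R1_afe]]]
          tendsto_mult[OF tendsto_const tendsto_mult[OF xlnx d']]])
  have v: "- (9/8) * ln 2 * diffs alpha 0 + nfe * diffs bfe 0 + nfe * afe 0 + nfe * (0 * ps (diffs (diffs alpha)) 0) = - (9/8) * ln 2"
    by (simp add: alpha_def diffs_def)
  have ev: "\<forall>\<^sub>F x in at_right 0. - (9/8) * ln 2 * ps (diffs alpha) x + nfe * ps (diffs bfe) x + nfe * ps afe x
        + nfe * ((x * ln x) * ((ps (diffs alpha) x - 1) / x)) = Wd x - nfe * ln x"
    using ev01
  proof eventually_elim
    case (elim x)
    have e: "(x * ln x) * ((ps (diffs alpha) x - 1) / x) = ln x * ps (diffs alpha) x - ln x"
      using elim by (simp add: field_simps)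
    have g: "Wd x - nfe * ln x = - (9/8) * ln 2 * ps (diffs alpha) x + nfe * ps (diffs bfe) x + nfe * ps afe x
        + nfe * (ln x * ps (diffs alpha) x - ln x)"
      unfolding Wd_def by (simp add: algebra_simps)
    show ?case by (simp only: e g)
  qed
  show ?thesis using Lim_transform_eventually[OF L ev] unfolding v .
qed


lemma W_eq_v:
  assumes l: "0 < l" "l < 1"
  shows "W l = vfe l"
proof -
  have "(\<lambda>x. W x - vfe x) l = 0"
  proof (rule ode_unique[of "\<lambda>x. W x - vfe x" "\<lambda>x. Wd x - vd x" "\<lambda>x. Wdd x - nfe * vfe x / (x * (1 - x))"])
    fix x :: real assume x: "0 < x" "x < 1"
    show "((\<lambda>x. W x - vfe x) has_real_derivative Wd x - vd x) (at x)"
      by (rule DERIV_diff[OF W_deriv[OF x] v_deriv[OF x]])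
    show "((\<lambda>x. Wd x - vd x) has_real_derivative Wdd x - nfe * vfe x / (x * (1 - x))) (at x)"
      by (rule DERIV_diff[OF Wd_deriv[OF x] vd_deriv[OF x]])
    have nz: "x * (1 - x) \<noteq> 0" using x by simp
    show "x * (1 - x) * (Wdd x - nfe * vfe x / (x * (1 - x))) = nfe * (W x - vfe x)"
      using W_ode[OF x] nz by (simp add: right_diff_distrib)
  next
    show "((\<lambda>x. W x - vfe x) \<longlongrightarrow> 0) (at_right 0)"
      using tendsto_diff[OF W_lim v_lim] by simp
    show "((\<lambda>x. Wd x - vd x) \<longlongrightarrow> 0) (at_right 0)"
      using tendsto_diff[OF Wd_lim vd_lim] by simp
  qed (use l in auto)
  thus ?thesis by simp
qed

lemma main_sums:
  assumes l: "0 < l" "l < 1"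
  shows "(\<lambda>i. (- (9/8) * ln 2 * afe i + nfe * bfe (i+1) + nfe * afe i * ln l) * l ^ (i+1)) sums (vfe l - 1)"
proof -
  have al: "\<bar>l\<bar> < 1" using l by simp
  have sa: "(\<lambda>n. afe n * l ^ Suc n) sums ps alpha l"
  proof -
    have "(\<lambda>n. alpha n * l ^ n) sums (ps alpha l + 0)" using R1_sums[OF R1_alpha al] by simp
    hence "(\<lambda>n. alpha (Suc n) * l ^ Suc n) sums ps alpha l"
      using sums_Suc_iff[of "\<lambda>n. alpha n * l ^ n"] by (simp add: alpha_def)
    thus ?thesis by (simp add: alpha_def)
  qed
  have sb: "(\<lambda>n. bfe (Suc n) * l ^ Suc n) sums (ps bfe l - bfe 0)"
  proof -
    have "(\<lambda>n. bfe n * l ^ n) sums (ps bfe l - bfe 0 + bfe 0 * l ^ 0)" using R1_sums[OF R1_bfe al] by simp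
    thus ?thesis using sums_Suc_iff[of "\<lambda>n. bfe n * l ^ n"] by blast
  qed
  have "(\<lambda>i. (- (9/8) * ln 2 + nfe * ln l) * (afe i * l ^ Suc i) + nfe * (bfe (Suc i) * l ^ Suc i))
        sums ((- (9/8) * ln 2 + nfe * ln l) * ps alpha l + nfe * (ps bfe l - bfe 0))"
    by (intro sums_add sums_mult sa sb)
  moreover have "(- (9/8) * ln 2 + nfe * ln l) * ps alpha l + nfe * (ps bfe l - bfe 0) = vfe l - 1"
    using W_eq_v[OF l] by (simp add: W_def nfe_def algebra_simps)
  moreover have "(\<lambda>i. (- (9/8) * ln 2 + nfe * ln l) * (afe i * l ^ Suc i) + nfe * (bfe (Suc i) * l ^ Suc i))
      = (\<lambda>i. (- (9/8) * ln 2 * afe i + nfe * bfe (i+1) + nfe * afe i * ln l) * l ^ (i+1))"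
    by (rule ext) (simp add: algebra_simps)
  ultimately show ?thesis by simp
qed


theorem mainTheorem5:
  fixes l :: real
  assumes "0 < l" and "l < 1"
  shows "((\<lambda>i. (- (9/8) * ln 2 * afe i + nfe * bfe (i+1) + nfe * afe i * ln l) * l ^ (i+1))
           sums (vfe l - 1)) \<and>
         - (9/8) * ln 2 * afe 0 + nfe * bfe 1 = - ((9/8) * ln 2 + 3/16) \<and>
         - (9/8) * ln 2 * afe 1 + nfe * bfe 2 = - ((27/256) * ln 2 - 51/1024) \<and>
         - (9/8) * ln 2 * afe 2 + nfe * bfe 3 = - ((315/8192) * ln 2 - 177/8192) \<and>
         nfe * afe 0 = 3/16 \<and> nfe * afe 1 = 9/512 \<and> nfe * afe 2 = 105/16384"
  unfolding afe_vals bfe_vals using main_sums[OF assms] by (simp add: nfe_def)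

end
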